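(* Let $X$ be a topological space, let $Y$ be a countable compact topological space, and let $f:X\times Y\to\overline{\mathbb R}$ be a separately continuous function. Then $(\wedge_f,\vee_f)$ is a stable pair of Hahn on $X$.
   Context: $\overline{\mathbb R}=[-\infty,+\infty]$ with its usual order topology. For $f:X\times Y\to\overline{\mathbb R}$ the minimal and maximal sections $\wedge_f,\vee_f:X\to\overline{\mathbb R}$ are $\wedge_f(x)=\inf_{y\in Y}f(x,y)$ and $\vee_f(x)=\sup_{y\in Y}f(x,y)$. $f$ is separately continuous if $y\mapsto f(x,y)$ is continuous for each $x\in X$ and $x\mapsto f(x,y)$ is continuous for each $y\in Y$. A pair $(g,h)$ of functions $g,h:X\to\overline{\mathbb R}$ is a stable pair of Hahn if there is a sequence of continuous functions $u_n:X\to\overline{\mathbb R}$ such that $g(x)=\min_{n\in\mathbb N}u_n(x)$ and $h(x)=\max_{n\in\mathbb N}u_n(x)$ for every $x\in X$ (the minimum and maximum being attained). *)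

theory Defs
  imports "HOL-Analysis.Analysis"
begin

definition separately_continuous :: "('a::topological_space \<times> 'b::topological_space \<Rightarrow> ereal) \<Rightarrow> bool" where
  "separately_continuous f \<longleftrightarrow>
     (\<forall>x. continuous_on UNIV (\<lambda>y. f (x, y))) \<and> (\<forall>y. continuous_on UNIV (\<lambda>x. f (x, y)))"

definition min_section :: "('a \<times> 'b \<Rightarrow> ereal) \<Rightarrow> 'a \<Rightarrow> ereal" where
  "min_section f x = (INF y. f (x, y))"

definition max_section :: "('a \<times> 'b \<Rightarrow> ereal) \<Rightarrow> 'a \<Rightarrow> ereal" where
  "max_section f x = (SUP y. f (x, y))"

definition stable_pair_Hahn :: "('a::topological_space \<Rightarrow> ereal) \<Rightarrow> ('a \<Rightarrow> ereal) \<Rightarrow> bool" where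
  "stable_pair_Hahn g h \<longleftrightarrow>
     (\<exists>u :: nat \<Rightarrow> 'a \<Rightarrow> ereal.
        (\<forall>n. continuous_on UNIV (u n)) \<and>
        (\<forall>x. (\<exists>n. u n x = g x) \<and> (\<forall>n. g x \<le> u n x)) \<and>
        (\<forall>x. (\<exists>n. u n x = h x) \<and> (\<forall>n. u n x \<le> h x)))"

end

theory Submission
  imports Defs
begin

theorem theorem2p1:
  fixes f :: "'a::topological_space \<times> 'b::topological_space \<Rightarrow> ereal"
  assumes "countable (UNIV :: 'b set)"
    and "compact (UNIV :: 'b set)"
    and "separately_continuous f"
  shows "stable_pair_Hahn (min_section f) (max_section f)"
proof -
  define e where "e = from_nat_into (UNIV :: 'b set)"
  have re: "range e = UNIV"
    unfolding e_def using assms(1) by (simp add: range_from_nat_into)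
  have c1: "\<And>x. continuous_on UNIV (\<lambda>y. f (x, y))"
   and c2: "\<And>y. continuous_on UNIV (\<lambda>x. f (x, y))"
    using assms(3) unfolding separately_continuous_def by auto
  show ?thesis
    unfolding stable_pair_Hahn_def
  proof (intro exI[of _ "\<lambda>n x. f (x, e n)"] conjI allI)
    fix n show "continuous_on UNIV (\<lambda>x. f (x, e n))" by (rule c2)
  next
    fix x
    obtain y where y: "\<forall>z. f (x, y) \<le> f (x, z)"
      using continuous_attains_inf[OF assms(2) _ c1[of x]] by auto
    have m: "min_section f x = f (x, y)"
      unfolding min_section_def by (metis (mono_tags, lifting) INF_eqI UNIV_I y)
    obtain n where "e n = y" using re by (metis UNIV_I imageE)
    then show "\<exists>n. f (x, e n) = min_section f x" using m by auto
    fix n show "min_section f x \<le> f (x, e n)" unfolding min_section_def by (rule INF_lower) simp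
  next
    fix x
    obtain y where y: "\<forall>z. f (x, z) \<le> f (x, y)"
      using continuous_attains_sup[OF assms(2) _ c1[of x]] by auto
    have m: "max_section f x = f (x, y)"
      unfolding max_section_def by (metis (mono_tags, lifting) SUP_eqI UNIV_I y)
    obtain n where "e n = y" using re by (metis UNIV_I imageE)
    then show "\<exists>n. f (x, e n) = max_section f x" using m by auto
    fix n show "f (x, e n) \<le> max_section f x" unfolding max_section_def by (rule SUP_upper) simp
  qed
qed

end
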